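(* Let $\alpha\in(0,2)$ and suppose $\liminf_{|x|\to\infty}\frac{e^{V(x)}}{|x|^{d+\alpha}}>0$. Let $\omega:\mathbb R^d\to(0,\infty)$ be continuous. Then there exists a constant $C_2(\omega)>0$ such that for all $f\in C_b^\infty(\mathbb R^d)$, $$\int\big(f(x)-\mu_V(f)\big)^2\frac{e^{V(x)}}{(1+|x|)^{d+\alpha}}\,\mu_V(dx)\le C_2(\omega)\int\omega(x)\int\frac{(f(y)-f(x))^2}{|y-x|^{d+\alpha}}\,dy\,\mu_V(dx).$$
   Context: Let $d\ge1$. $V:\mathbb R^d\to\mathbb R$ is a locally bounded measurable function such that $e^{-V}$ is bounded and $\int e^{-V(x)}dx<\infty$; $\mu_V(dx)=\frac{e^{-V(x)}}{\int e^{-V(y)}dy}dx$, and $\mu_V(f)=\int f\,d\mu_V$. $C_b^\infty(\mathbb R^d)$ is the set of smooth functions on $\mathbb R^d$ that are bounded together with all their derivatives. *)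

theory Defs
  imports "HOL-Analysis.Analysis"
begin

text \<open>Smooth functions bounded together with all their derivatives (C_b^infinity).\<close>
coinductive Cb_inf :: "('a::euclidean_space \<Rightarrow> real) \<Rightarrow> bool" where
  "bounded (range f) \<Longrightarrow> (\<forall>x. f differentiable (at x)) \<Longrightarrow>
   (\<forall>i\<in>Basis. Cb_inf (\<lambda>x. frechet_derivative f (at x) i)) \<Longrightarrow> Cb_inf f"

definition Z_V :: "('a::euclidean_space \<Rightarrow> real) \<Rightarrow> real" where
  "Z_V V = (\<integral>y. exp (- V y) \<partial>lborel)"

definition mu_V :: "('a::euclidean_space \<Rightarrow> real) \<Rightarrow> 'a measure" where
  "mu_V V = density lborel (\<lambda>x. ennreal (exp (- V x) / Z_V V))"

definition mean_V :: "('a::euclidean_space \<Rightarrow> real) \<Rightarrow> ('a \<Rightarrow> real) \<Rightarrow> real" where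
  "mean_V V f = (\<integral>x. f x \<partial>mu_V V)"

definition admissible_V :: "('a::euclidean_space \<Rightarrow> real) \<Rightarrow> bool" where
  "admissible_V V \<longleftrightarrow> V \<in> borel_measurable lborel
     \<and> (\<forall>K. compact K \<longrightarrow> bounded (V ` K))
     \<and> bounded (range (\<lambda>x. exp (- V x)))
     \<and> integrable lborel (\<lambda>x. exp (- V x))"

end

theory Submission imports Defs "HOL-Probability.Probability" begin


lemma oned_finite:
  fixes p :: real assumes p: "p > 1"
  shows "(\<integral>\<^sup>+t. ennreal ((1 + \<bar>t\<bar>) powr (-p)) \<partial>lborel) < \<infinity>"
proof -
  define f where "f = (\<lambda>x::real. ennreal (indicator {1..} x * x powr (-p)))"
  have fm[measurable]: "f \<in> borel_measurable borel" unfolding f_def by measurable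
  have hi: "((\<lambda>x::real. x powr (-p)) has_integral -(1 powr (-p+1)) / (-p+1)) {1..}"
    using has_integral_powr_to_inf[of "-p" 1] p by simp
  hence "((\<lambda>x::real. if x \<in> {1..} then x powr (-p) else 0) has_integral -(1 powr (-p+1)) / (-p+1)) UNIV"
    using has_integral_restrict_UNIV[of "{1..}" "\<lambda>x::real. x powr (-p)"] by simp
  hence hi2: "((\<lambda>x::real. indicator {1..} x * x powr (-p)) has_integral -(1 powr (-p+1)) / (-p+1)) UNIV"
    by (rule has_integral_eq[rotated]) (auto simp: indicator_def)
  have "integral\<^sup>N lborel (\<lambda>x::real. indicator {1..} x * x powr (-p)) = ennreal (-(1 powr (-p+1)) / (-p+1))"
    by (rule nn_integral_has_integral_lborel[OF _ _ hi2]) (auto simp: indicator_def)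
  hence A: "(\<integral>\<^sup>+x. f x \<partial>lborel) < \<infinity>" unfolding f_def by simp
  have B1: "(\<integral>\<^sup>+x. f x \<partial>lborel) = (\<integral>\<^sup>+x. f (1 + 1 * x) \<partial>lborel)"
    using nn_integral_real_affine[OF fm, of 1 1] by simp
  have B2: "(\<integral>\<^sup>+x. f x \<partial>lborel) = (\<integral>\<^sup>+x. f (1 + (-1) * x) \<partial>lborel)"
    using nn_integral_real_affine[OF fm, of "-1" 1] by simp
  have "(\<integral>\<^sup>+t. ennreal ((1 + \<bar>t\<bar>) powr (-p)) \<partial>lborel) \<le> (\<integral>\<^sup>+x. f (1 + 1 * x) + f (1 + (-1) * x) \<partial>lborel)"
  proof (rule nn_integral_mono)
    fix t :: real
    show "ennreal ((1 + \<bar>t\<bar>) powr (-p)) \<le> f (1 + 1 * t) + f (1 + (-1) * t)"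
      unfolding f_def
      by (cases "t \<ge> 0") (auto simp: indicator_def simp flip: ennreal_plus)
  qed
  also have "\<dots> = (\<integral>\<^sup>+x. f (1 + 1 * x) \<partial>lborel) + (\<integral>\<^sup>+x. f (1 + (-1) * x) \<partial>lborel)"
    by (rule nn_integral_add) (auto simp: f_def)
  also have "\<dots> < \<infinity>" using A B1 B2 by (simp add: ennreal_add_less_top)
  finally show ?thesis .
qed

lemma ddim_finite:
  fixes s :: real assumes s: "s > real DIM('a::euclidean_space)"
  shows "(\<integral>\<^sup>+x. ennreal ((1 + norm (x::'a)) powr (-s)) \<partial>lborel) < \<infinity>"
proof -
  define q where "q = s / real DIM('a)"
  have q: "q > 1" using s by (simp add: q_def field_simps)
  have "(\<integral>\<^sup>+x. ennreal ((1 + norm (x::'a)) powr (-s)) \<partial>lborel)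
     \<le> (\<integral>\<^sup>+x. ennreal (\<Prod>b\<in>Basis. (1 + \<bar>(x::'a) \<bullet> b\<bar>) powr (-q)) \<partial>lborel)"
  proof (rule nn_integral_mono)
    fix x :: 'a
    have "(1 + norm x) powr (-s) = (\<Prod>b\<in>(Basis::'a set). (1 + norm x) powr (-q))"
    proof -
      have "1 + norm x > 0" by (simp add: add_pos_nonneg)
      hence pos: "(1 + norm x) powr (-q) > 0" by simp
      have "(\<Prod>b\<in>(Basis::'a set). (1 + norm x) powr (-q)) = ((1 + norm x) powr (-q)) powr (real DIM('a))"
        using powr_realpow[OF pos, of "DIM('a)"] by simp
      also have "\<dots> = (1 + norm x) powr (-s)" by (simp add: powr_powr q_def)
      finally show ?thesis by simp
    qed
    also have "\<dots> \<le> (\<Prod>b\<in>Basis. (1 + \<bar>x \<bullet> b\<bar>) powr (-q))"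
    proof (rule prod_mono)
      fix b :: 'a assume "b \<in> Basis"
      hence "\<bar>x \<bullet> b\<bar> \<le> norm x" by (rule Basis_le_norm)
      thus "0 \<le> (1 + norm x) powr (-q) \<and> (1 + norm x) powr (-q) \<le> (1 + \<bar>x \<bullet> b\<bar>) powr (-q)"
        using q by (auto intro!: powr_mono2')
    qed
    finally show "ennreal ((1 + norm x) powr (-s)) \<le> ennreal (\<Prod>b\<in>Basis. (1 + \<bar>x \<bullet> b\<bar>) powr (-q))"
      by (rule ennreal_leI)
  qed
  also have "\<dots> = (\<Prod>b\<in>(Basis::'a set). (\<integral>\<^sup>+t. ennreal ((1 + \<bar>t\<bar>) powr (-q)) \<partial>lborel))"
    using nn_integral_lborel_prod[where f="\<lambda>b t. (1 + \<bar>t\<bar>) powr (-q)"]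
    by (simp add: prod_ennreal)
  also have "\<dots> < \<infinity>"
    using oned_finite[OF q] by (simp add: less_top power_less_top_ennreal)
  finally show ?thesis .
qed



lemma one_plus_norm_pos[simp]: "1 + norm (x::'a::real_normed_vector) > 0"
  by (simp add: add_pos_nonneg)
lemma one_plus_norm_ne[simp]: "1 + norm (x::'a::real_normed_vector) \<noteq> 0"
  using one_plus_norm_pos[of x] by linarith

lemma tail_bound:
  fixes V :: "'a::euclidean_space \<Rightarrow> real" and s :: real
  assumes bd: "bounded (range (\<lambda>x. exp (- V x)))" and s: "s > 0"
    and lim: "Liminf at_infinity (\<lambda>x. ereal (exp (V x) / norm x powr s)) > 0"
  shows "\<exists>K>0. \<forall>z. exp (- V z) \<le> K * (1 + norm z) powr (-s)"
proof -
  obtain E where E: "\<And>x. exp (- V x) \<le> E"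
    using bd unfolding bounded_iff by (auto simp del: exp_minus)
  obtain c where c: "0 < c" "c < Liminf at_infinity (\<lambda>x. ereal (exp (V x) / norm x powr s))"
    using dense[OF lim] by blast
  obtain c' where c': "c = ereal c'" "c' > 0" using c
    by (cases c) auto
  have "eventually (\<lambda>x. ereal (exp (V x) / norm x powr s) > c) at_infinity"
    by (rule less_LiminfD[OF c(2)])
  then obtain R where R: "\<And>x. R \<le> norm x \<Longrightarrow> exp (V x) / norm x powr s > c'"
    unfolding eventually_at_infinity c' by auto
  define R1 where "R1 = max R 1"
  define K where "K = max (2 powr s / c') (E * (1 + R1) powr s) + 1"
  have "2 powr s / c' > 0" using c' by simp
  hence Kpos: "K > 0" unfolding K_def by linarith
  have "exp (- V z) \<le> K * (1 + norm z) powr (-s)" for z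
  proof (cases "norm z \<ge> R1")
    case True
    have nz: "norm z \<ge> 1" "norm z \<ge> R" using True unfolding R1_def by auto
    have "z \<noteq> 0" using nz by auto
    hence npos: "norm z powr s > 0" by simp
    have "exp (V z) > c' * norm z powr s" using R[OF nz(2)] npos by (simp add: field_simps)
    hence "exp (- V z) < 1 / (c' * norm z powr s)"
      using c' npos by (simp add: exp_minus field_simps)
    also have "1 / (c' * norm z powr s) \<le> 2 powr s / c' * (1 + norm z) powr (-s)"
    proof -
      have "(1 + norm z) powr s \<le> (2 * norm z) powr s" using nz s by (intro powr_mono2) auto
      also have "\<dots> = 2 powr s * norm z powr s" by (simp add: powr_mult)
      finally have h: "(1 + norm z) powr s \<le> 2 powr s * norm z powr s" .
      have p1: "(1 + norm z) powr s > 0" by (simp add: add_pos_nonneg)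
      show ?thesis using h c' npos p1
        by (simp add: powr_minus field_simps)
    qed
    also have "\<dots> \<le> K * (1 + norm z) powr (-s)"
      by (intro mult_right_mono) (auto simp: K_def)
    finally show ?thesis by simp
  next
    case False
    have p1: "(1 + norm z) powr s > 0" by (simp add: add_pos_nonneg)
    have "(1 + norm z) powr s \<le> (1 + R1) powr s" using False s by (intro powr_mono2) auto
    have E0: "E \<ge> 0" using E[of z] by (meson exp_ge_zero order.trans)
    have "exp (- V z) \<le> E" by (rule E)
    also have "E \<le> E * (1 + R1) powr s * (1 + norm z) powr (-s)"
    proof -
      have "E * (1 + norm z) powr s \<le> E * (1 + R1) powr s"
        using E0 \<open>(1 + norm z) powr s \<le> (1 + R1) powr s\<close> by (simp add: mult_left_mono)
      thus ?thesis using p1 by (simp add: powr_minus field_simps)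
    qed
    also have "\<dots> \<le> K * (1 + norm z) powr (-s)"
      by (intro mult_right_mono) (auto simp: K_def)
    finally show ?thesis .
  qed
  thus ?thesis using Kpos by blast
qed



lemma (in prob_space) sq_le_nn:
  fixes X :: "'a \<Rightarrow> real"
  assumes Xm[measurable]: "X \<in> borel_measurable M" and B: "\<And>x. \<bar>X x\<bar> \<le> B"
  shows "ennreal ((\<integral>x. X x \<partial>M)\<^sup>2) \<le> (\<integral>\<^sup>+x. ennreal ((X x)\<^sup>2) \<partial>M)"
proof -
  have iX: "integrable M X"
    by (rule integrable_const_bound[where B=B]) (use B in auto)
  have "\<bar>(X x)\<^sup>2\<bar> \<le> B\<^sup>2" for x
    using B[of x] abs_le_square_iff[of "X x" B] by simp
  hence iX2: "integrable M (\<lambda>x. (X x)\<^sup>2)"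
    by (intro integrable_const_bound[where B="B\<^sup>2"]) auto
  have "variance X \<ge> 0" by (intro integral_nonneg_AE) auto
  hence le: "(expectation X)\<^sup>2 \<le> expectation (\<lambda>x. (X x)\<^sup>2)"
    using variance_eq[OF iX iX2] by simp
  have "(\<integral>\<^sup>+x. ennreal ((X x)\<^sup>2) \<partial>M) = ennreal (expectation (\<lambda>x. (X x)\<^sup>2))"
    by (rule nn_integral_eq_integral[OF iX2]) auto
  thus ?thesis using le by (simp add: ennreal_leI)
qed

lemma Z_pos:
  fixes V :: "'a::euclidean_space \<Rightarrow> real"
  assumes "admissible_V V"
  shows "Z_V V > 0"
proof -
  have iV: "integrable lborel (\<lambda>x. exp (- V x))" using assms unfolding admissible_V_def by blast
  have ge: "Z_V V \<ge> 0" unfolding Z_V_def by (intro integral_nonneg_AE) auto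
  have "Z_V V \<noteq> 0"
  proof
    assume "Z_V V = 0"
    hence "AE x in lborel. exp (- V x) = 0"
      using integral_nonneg_eq_0_iff_AE[OF iV] unfolding Z_V_def by auto
    hence "AE x in (lborel::'a measure). False" by simp
    hence "ae_filter (lborel::'a measure) = bot" using trivial_limit_def by blast
    thus False by (simp add: ae_filter_eq_bot_iff)
  qed
  thus ?thesis using ge by simp
qed

lemma nn_exp_V:
  fixes V :: "'a::euclidean_space \<Rightarrow> real"
  assumes "admissible_V V"
  shows "(\<integral>\<^sup>+x. ennreal (exp (- V x)) \<partial>lborel) = ennreal (Z_V V)"
proof -
  have iV: "integrable lborel (\<lambda>x. exp (- V x))" using assms unfolding admissible_V_def by blast
  show ?thesis unfolding Z_V_def by (rule nn_integral_eq_integral[OF iV]) auto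
qed

lemma prob_mu_V:
  fixes V :: "'a::euclidean_space \<Rightarrow> real"
  assumes adm: "admissible_V V"
  shows "prob_space (mu_V V)"
proof
  have Vm[measurable]: "V \<in> borel_measurable borel" using adm unfolding admissible_V_def by simp
  have Z: "Z_V V > 0" by (rule Z_pos[OF adm])
  have "emeasure (mu_V V) (space (mu_V V)) = (\<integral>\<^sup>+x. ennreal (exp (- V x) / Z_V V) \<partial>lborel)"
    unfolding mu_V_def by (simp add: emeasure_density)
  also have "\<dots> = (\<integral>\<^sup>+x. ennreal (exp (- V x)) * ennreal (1 / Z_V V) \<partial>lborel)"
    using Z by (intro nn_integral_cong) (simp add: ennreal_mult[symmetric])
  also have "\<dots> = ennreal (Z_V V) * ennreal (1 / Z_V V)"
    by (simp add: nn_integral_multc nn_exp_V[OF adm])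
  also have "\<dots> = 1" using Z by (simp add: ennreal_mult[symmetric])
  finally show "emeasure (mu_V V) (space (mu_V V)) = 1" .
qed


theorem proposition1p7:
  fixes V :: "'a::euclidean_space \<Rightarrow> real" and \<alpha> :: real and \<omega> :: "'a \<Rightarrow> real"
  assumes "admissible_V V"
    and "0 < \<alpha>" and "\<alpha> < 2"
    and "Liminf at_infinity (\<lambda>x. ereal (exp (V x) / norm x powr (real DIM('a) + \<alpha>))) > 0"
    and "continuous_on UNIV \<omega>" and "\<forall>x. \<omega> x > 0"
  shows "\<exists>C>0. \<forall>f. Cb_inf f \<longrightarrow>
    (\<integral>\<^sup>+x. ennreal ((f x - mean_V V f)\<^sup>2 * exp (V x) / (1 + norm x) powr (real DIM('a) + \<alpha>)) \<partial>mu_V V)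
    \<le> ennreal C * (\<integral>\<^sup>+x. ennreal (\<omega> x) *
         (\<integral>\<^sup>+y. ennreal ((f y - f x)\<^sup>2 / norm (y - x) powr (real DIM('a) + \<alpha>)) \<partial>lborel) \<partial>mu_V V)"
proof -
  have adm: "admissible_V V" by fact
  have Vm[measurable]: "V \<in> borel_measurable borel" using assms(1) unfolding admissible_V_def by simp
  have om[measurable]: "\<omega> \<in> borel_measurable borel" using assms(5) by (rule borel_measurable_continuous_onI)
  define s where "s = real DIM('a) + \<alpha>"
  have s: "s > real DIM('a)" "s > 0" using assms(2) by (auto simp: s_def)
  define Z where "Z = Z_V V"
  have Z: "Z > 0" using Z_pos[OF adm] Z_def by simp
  define g where "g = (\<lambda>x::'a. (1 + norm x) powr (-s))"
  have gm[measurable]: "g \<in> borel_measurable borel" unfolding g_def by measurable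
  have gpos: "\<And>x. g x > 0" unfolding g_def by simp
  have "(\<integral>\<^sup>+x. ennreal (g x) \<partial>lborel) < top" using ddim_finite[OF s(1)] unfolding g_def by simp
  then obtain G where G: "(\<integral>\<^sup>+x. ennreal (g x) \<partial>lborel) = ennreal G" "G \<ge> 0"
    unfolding less_top_ennreal by auto
  obtain K where K: "K > 0" "\<And>z. exp (- V z) \<le> K * g z"
    using tail_bound[of V s] assms(1,4) s(2) unfolding admissible_V_def g_def s_def by auto
  define B where "B = cball (0::'a) 1"
  have Bm[measurable]: "B \<in> sets borel" unfolding B_def by simp
  define vol where "vol = unit_ball_vol (real DIM('a))"
  have vol: "vol > 0" unfolding vol_def by simp
  have volB: "emeasure lborel B = ennreal vol" unfolding B_def vol_def by (subst emeasure_cball) auto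
  have Bc: "compact B" "B \<noteq> {}" unfolding B_def by auto
  obtain xm where xm: "xm \<in> B" "\<And>y. y \<in> B \<Longrightarrow> \<omega> xm \<le> \<omega> y"
    using continuous_attains_inf[OF Bc continuous_on_subset[OF assms(5)]] by auto
  obtain Vb where Vb: "\<And>b. b \<in> B \<Longrightarrow> V b \<le> Vb"
  proof -
    have "bounded (V ` B)" using assms(1) Bc(1) unfolding admissible_V_def by blast
    then obtain a where "\<And>b. b \<in> B \<Longrightarrow> norm (V b) \<le> a" unfolding bounded_iff by auto
    hence "\<And>b. b \<in> B \<Longrightarrow> V b \<le> a" by (metis abs_le_D1 real_norm_def)
    thus ?thesis using that by blast
  qed
  define c0 where "c0 = \<omega> xm * exp (- Vb) / Z"
  have c0: "c0 > 0" using assms(6) Z unfolding c0_def by simp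
  have c0le: "c0 \<le> exp (- V b) / Z * \<omega> b" if b: "b \<in> B" for b
  proof -
    have "exp (- Vb) \<le> exp (- V b)" using Vb[OF b] by simp
    hence "\<omega> xm * exp (- Vb) \<le> \<omega> b * exp (- V b)" using xm(2)[OF b] assms(6)
      by (intro mult_mono) (auto simp: less_imp_le)
    thus ?thesis unfolding c0_def using Z by (simp add: divide_right_mono mult.commute)
  qed
  define C where "C = 2 / Z * (1 + K / Z * G) / c0 / vol"
  have Cpos: "C > 0" unfolding C_def using Z K G c0 vol by (simp add: add_pos_nonneg)
  have Mprob: "prob_space (mu_V V)" by (rule prob_mu_V[OF adm])
  interpret P: prob_space "mu_V V" by (rule Mprob)
  show ?thesis
  proof (intro exI[of _ C] conjI allI impI Cpos)
    fix f :: "'a \<Rightarrow> real" assume "Cb_inf f"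
    then have fb: "bounded (range f)" and fd: "\<forall>x. f differentiable (at x)" by (auto elim: Cb_inf.cases)
    have "continuous_on UNIV f" using fd
      by (meson continuous_at_imp_continuous_on differentiable_imp_continuous_within)
    hence fm[measurable]: "f \<in> borel_measurable borel" by (rule borel_measurable_continuous_onI)
    obtain Mf where Mf: "\<And>x. \<bar>f x\<bar> \<le> Mf" using fb unfolding bounded_iff by auto
    define m where "m = mean_V V f"
    define dens where "dens = (\<lambda>x. ennreal (exp (- V x) / Z))"
    have Mdef: "mu_V V = density lborel dens" unfolding mu_V_def dens_def Z_def ..
    have densm[measurable]: "dens \<in> borel_measurable borel" unfolding dens_def by measurable
    define inner where "inner = (\<lambda>b. \<integral>\<^sup>+w. ennreal ((f w - f b)\<^sup>2 * g w) \<partial>lborel)"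
    have innerm[measurable]: "inner \<in> borel_measurable borel" unfolding inner_def by measurable
    define D where "D = (\<integral>\<^sup>+b. indicator B b * inner b \<partial>lborel)"
    define J where "J = (\<integral>\<^sup>+b. indicator B b * ennreal ((f b - m)\<^sup>2) \<partial>lborel)"
    define LHS where "LHS = (\<integral>\<^sup>+x. ennreal ((f x - m)\<^sup>2 * exp (V x) / (1 + norm x) powr (real DIM('a) + \<alpha>)) \<partial>mu_V V)"
    define R where "R = (\<integral>\<^sup>+x. ennreal (\<omega> x) * (\<integral>\<^sup>+y. ennreal ((f y - f x)\<^sup>2 / norm (y - x) powr (real DIM('a) + \<alpha>)) \<partial>lborel) \<partial>mu_V V)"
    define I1 where "I1 = (\<lambda>x. \<integral>\<^sup>+b. indicator B b * ennreal ((f x - f b)\<^sup>2) \<partial>lborel)"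
    have I1m[measurable]: "I1 \<in> borel_measurable borel" unfolding I1_def by measurable

    have L1: "LHS = (\<integral>\<^sup>+x. ennreal ((f x - m)\<^sup>2) * (ennreal (g x) * ennreal (1 / Z)) \<partial>lborel)"
    proof -
      have im: "(\<lambda>x. ennreal ((f x - m)\<^sup>2 * exp (V x) / (1 + norm x) powr (real DIM('a) + \<alpha>))) \<in> borel_measurable lborel"
        by measurable
      have "LHS = (\<integral>\<^sup>+x. dens x * ennreal ((f x - m)\<^sup>2 * exp (V x) / (1 + norm x) powr (real DIM('a) + \<alpha>)) \<partial>lborel)"
        unfolding LHS_def Mdef using densm im by (simp add: nn_integral_density)
      also have "(\<integral>\<^sup>+x. dens x * ennreal ((f x - m)\<^sup>2 * exp (V x) / (1 + norm x) powr (real DIM('a) + \<alpha>)) \<partial>lborel)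
          = (\<integral>\<^sup>+x. ennreal ((f x - m)\<^sup>2) * (ennreal (g x) * ennreal (1 / Z)) \<partial>lborel)"
      proof (rule nn_integral_cong)
        fix x
        have "exp (- V x) / Z * ((f x - m)\<^sup>2 * exp (V x) / (1 + norm x) powr (real DIM('a) + \<alpha>))
              = (f x - m)\<^sup>2 * (g x * (1 / Z))"
        proof -
          have gi: "g x = inverse ((1 + norm x) powr s)" by (simp add: g_def powr_minus)
          show ?thesis using Z unfolding gi s_def by (simp add: exp_minus field_simps)
        qed
        moreover have "g x \<ge> 0" using gpos[of x] by simp
        ultimately show "dens x * ennreal ((f x - m)\<^sup>2 * exp (V x) / (1 + norm x) powr (real DIM('a) + \<alpha>))
            = ennreal ((f x - m)\<^sup>2) * (ennreal (g x) * ennreal (1 / Z))"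
          unfolding dens_def using Z by (simp add: ennreal_mult[symmetric])
      qed
      finally show ?thesis .
    qed

    have L2: "ennreal vol * ennreal ((f x - m)\<^sup>2) \<le> 2 * I1 x + 2 * J" for x
    proof -
      have "ennreal vol * ennreal ((f x - m)\<^sup>2) = (\<integral>\<^sup>+b. indicator B b \<partial>lborel) * ennreal ((f x - m)\<^sup>2)"
        using volB by simp
      also have "\<dots> = (\<integral>\<^sup>+b. indicator B b * ennreal ((f x - m)\<^sup>2) \<partial>lborel)"
        by (rule nn_integral_multc[symmetric]) simp
      also have "\<dots> \<le> (\<integral>\<^sup>+b. 2 * (indicator B b * ennreal ((f x - f b)\<^sup>2)) + 2 * (indicator B b * ennreal ((f b - m)\<^sup>2)) \<partial>lborel)"
      proof (rule nn_integral_mono)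
        fix b
        have eq: "2 * (f x - f b)\<^sup>2 + 2 * (f b - m)\<^sup>2 - (f x - m)\<^sup>2 = ((f x - f b) - (f b - m))\<^sup>2"
          by (simp add: power2_eq_square algebra_simps)
        have "(f x - m)\<^sup>2 \<le> 2 * (f x - f b)\<^sup>2 + 2 * (f b - m)\<^sup>2"
          using eq zero_le_power2[of "(f x - f b) - (f b - m)"] by linarith
        hence "ennreal ((f x - m)\<^sup>2) \<le> ennreal (2 * (f x - f b)\<^sup>2 + 2 * (f b - m)\<^sup>2)"
          by (rule ennreal_leI)
        also have "\<dots> = 2 * ennreal ((f x - f b)\<^sup>2) + 2 * ennreal ((f b - m)\<^sup>2)"
          by (simp add: ennreal_plus ennreal_mult)
        finally have h: "ennreal ((f x - m)\<^sup>2) \<le> 2 * ennreal ((f x - f b)\<^sup>2) + 2 * ennreal ((f b - m)\<^sup>2)" .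
        show "indicator B b * ennreal ((f x - m)\<^sup>2) \<le> 2 * (indicator B b * ennreal ((f x - f b)\<^sup>2)) + 2 * (indicator B b * ennreal ((f b - m)\<^sup>2))"
          using h by (cases "b \<in> B") auto
      qed
      also have "\<dots> = (\<integral>\<^sup>+b. 2 * (indicator B b * ennreal ((f x - f b)\<^sup>2)) \<partial>lborel) + (\<integral>\<^sup>+b. 2 * (indicator B b * ennreal ((f b - m)\<^sup>2)) \<partial>lborel)"
        by (rule nn_integral_add; measurable)
      also have "\<dots> = 2 * I1 x + 2 * J"
        unfolding I1_def J_def by (intro arg_cong2[where f="(+)"] nn_integral_cmult; measurable)
      finally show ?thesis .
    qed

    have FD: "(\<integral>\<^sup>+x. I1 x * ennreal (g x) \<partial>lborel) = D"
    proof -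
      have "(\<integral>\<^sup>+x. I1 x * ennreal (g x) \<partial>lborel) = (\<integral>\<^sup>+x. \<integral>\<^sup>+b. indicator B b * ennreal ((f x - f b)\<^sup>2) * ennreal (g x) \<partial>lborel \<partial>lborel)"
        unfolding I1_def by (intro nn_integral_cong nn_integral_multc[symmetric]) measurable
      also have "\<dots> = (\<integral>\<^sup>+b. \<integral>\<^sup>+x. indicator B b * ennreal ((f x - f b)\<^sup>2) * ennreal (g x) \<partial>lborel \<partial>lborel)"
        by (rule lborel_pair.Fubini'[symmetric]) measurable
      also have "\<dots> = (\<integral>\<^sup>+b. indicator B b * inner b \<partial>lborel)"
        unfolding inner_def
      proof (rule nn_integral_cong)
        fix b
        have "(\<integral>\<^sup>+x. indicator B b * ennreal ((f x - f b)\<^sup>2) * ennreal (g x) \<partial>lborel)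
            = (\<integral>\<^sup>+x. indicator B b * ennreal ((f x - f b)\<^sup>2 * g x) \<partial>lborel)"
          using gpos by (intro nn_integral_cong) (simp add: ennreal_mult less_imp_le mult.assoc)
        also have "\<dots> = indicator B b * (\<integral>\<^sup>+x. ennreal ((f x - f b)\<^sup>2 * g x) \<partial>lborel)"
          by (rule nn_integral_cmult) measurable
        finally show "(\<integral>\<^sup>+x. indicator B b * ennreal ((f x - f b)\<^sup>2) * ennreal (g x) \<partial>lborel)
            = indicator B b * (\<integral>\<^sup>+w. ennreal ((f w - f b)\<^sup>2 * g w) \<partial>lborel)" .
      qed
      finally show ?thesis unfolding D_def .
    qed

    have L3: "ennreal vol * LHS \<le> ennreal (2 / Z) * D + ennreal (2 / Z) * (J * ennreal G)"
    proof -
      have "ennreal vol * LHS = (\<integral>\<^sup>+x. (ennreal vol * ennreal ((f x - m)\<^sup>2)) * (ennreal (g x) * ennreal (1 / Z)) \<partial>lborel)"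
        unfolding L1 by (subst nn_integral_cmult[symmetric]) (measurable, simp add: mult.assoc)
      also have "\<dots> \<le> (\<integral>\<^sup>+x. (2 * I1 x + 2 * J) * (ennreal (g x) * ennreal (1 / Z)) \<partial>lborel)"
        by (intro nn_integral_mono mult_right_mono L2) simp
      also have "\<dots> = (\<integral>\<^sup>+x. ennreal (2 / Z) * (I1 x * ennreal (g x)) + ennreal (2 / Z) * J * ennreal (g x) \<partial>lborel)"
      proof (rule nn_integral_cong)
        fix x
        have e: "ennreal (2 / Z) = 2 * ennreal (1 / Z)" using Z ennreal_mult[of 2 "1/Z"] by simp
        show "(2 * I1 x + 2 * J) * (ennreal (g x) * ennreal (1 / Z)) = ennreal (2 / Z) * (I1 x * ennreal (g x)) + ennreal (2 / Z) * J * ennreal (g x)"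
          unfolding e by (simp add: algebra_simps)
      qed
      also have "\<dots> = (\<integral>\<^sup>+x. ennreal (2 / Z) * (I1 x * ennreal (g x)) \<partial>lborel) + (\<integral>\<^sup>+x. ennreal (2 / Z) * J * ennreal (g x) \<partial>lborel)"
        by (rule nn_integral_add; measurable)
      also have "\<dots> = ennreal (2 / Z) * D + ennreal (2 / Z) * (J * ennreal G)"
        by (subst nn_integral_cmult, measurable, subst nn_integral_cmult, measurable)
           (simp add: FD G mult.assoc)
      finally show ?thesis .
    qed

    have fi: "integrable (mu_V V) f"
      using Mf by (intro P.integrable_const_bound[where B=Mf]) (auto simp: Mdef)
    have Jb: "ennreal ((f b - m)\<^sup>2) \<le> ennreal (K / Z) * inner b" for b
    proof -
      have bd: "\<bar>f b - f z\<bar> \<le> 2 * Mf" for z using Mf[of b] Mf[of z] by linarith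
      have "(\<integral>z. f b - f z \<partial>mu_V V) = f b - m"
        using fi Bochner_Integration.integral_diff[OF P.integrable_const[of "f b"] fi] unfolding m_def mean_V_def
        by (simp add: P.prob_space)
      hence "ennreal ((f b - m)\<^sup>2) \<le> (\<integral>\<^sup>+z. ennreal ((f b - f z)\<^sup>2) \<partial>mu_V V)"
        using P.sq_le_nn[of "\<lambda>z. f b - f z" "2 * Mf"] bd by (simp add: Mdef)
      also have "\<dots> = (\<integral>\<^sup>+z. dens z * ennreal ((f b - f z)\<^sup>2) \<partial>lborel)"
        unfolding Mdef by (rule nn_integral_density) measurable
      also have "\<dots> \<le> (\<integral>\<^sup>+z. ennreal (K / Z) * ennreal ((f z - f b)\<^sup>2 * g z) \<partial>lborel)"
      proof (rule nn_integral_mono)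
        fix z
        have "exp (- V z) / Z * (f b - f z)\<^sup>2 \<le> K / Z * ((f z - f b)\<^sup>2 * g z)"
        proof -
          have "exp (- V z) / Z \<le> K * g z / Z" using K(2)[of z] Z by (simp add: divide_right_mono)
          hence "exp (- V z) / Z * (f z - f b)\<^sup>2 \<le> K * g z / Z * (f z - f b)\<^sup>2"
            by (rule mult_right_mono) simp
          thus ?thesis by (simp add: power2_commute mult_ac)
        qed
        hence "ennreal (exp (- V z) / Z * (f b - f z)\<^sup>2) \<le> ennreal (K / Z * ((f z - f b)\<^sup>2 * g z))"
          by (rule ennreal_leI)
        thus "dens z * ennreal ((f b - f z)\<^sup>2) \<le> ennreal (K / Z) * ennreal ((f z - f b)\<^sup>2 * g z)"
          unfolding dens_def using Z K gpos[of z] by (simp add: ennreal_mult[symmetric])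
      qed
      also have "\<dots> = ennreal (K / Z) * inner b"
        unfolding inner_def by (rule nn_integral_cmult) measurable
      finally show ?thesis .
    qed
    have JD: "J \<le> ennreal (K / Z) * D"
    proof -
      have "J \<le> (\<integral>\<^sup>+b. ennreal (K / Z) * (indicator B b * inner b) \<partial>lborel)"
        unfolding J_def
      proof (rule nn_integral_mono)
        fix b show "indicator B b * ennreal ((f b - m)\<^sup>2) \<le> ennreal (K / Z) * (indicator B b * inner b)"
          using Jb[of b] by (cases "b \<in> B") auto
      qed
      also have "\<dots> = ennreal (K / Z) * D" unfolding D_def by (rule nn_integral_cmult) measurable
      finally show ?thesis .
    qed

    have RD: "ennreal c0 * D \<le> R"
    proof -
      define Q where "Q = (\<lambda>x. \<integral>\<^sup>+y. ennreal ((f y - f x)\<^sup>2 / norm (y - x) powr (real DIM('a) + \<alpha>)) \<partial>lborel)"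
      have Qm[measurable]: "Q \<in> borel_measurable borel" unfolding Q_def by measurable
      have "R = (\<integral>\<^sup>+x. dens x * (ennreal (\<omega> x) * Q x) \<partial>lborel)"
        unfolding R_def Q_def Mdef by (rule nn_integral_density) measurable
      moreover have "ennreal c0 * D = (\<integral>\<^sup>+x. ennreal c0 * (indicator B x * inner x) \<partial>lborel)"
        unfolding D_def by (rule nn_integral_cmult[symmetric]) measurable
      moreover have "(\<integral>\<^sup>+x. ennreal c0 * (indicator B x * inner x) \<partial>lborel) \<le> (\<integral>\<^sup>+x. dens x * (ennreal (\<omega> x) * Q x) \<partial>lborel)"
      proof (rule nn_integral_mono)
        fix x
        show "ennreal c0 * (indicator B x * inner x) \<le> dens x * (ennreal (\<omega> x) * Q x)"
        proof (cases "x \<in> B")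
          case False thus ?thesis by simp
        next
          case True
          have nx: "norm x \<le> 1" using True unfolding B_def by simp
          have c: "ennreal c0 \<le> dens x * ennreal (\<omega> x)"
            unfolding dens_def using c0le[OF True] Z assms(6)
            by (simp add: ennreal_mult[symmetric] ennreal_leI less_imp_le)
          have iq: "inner x \<le> Q x"
            unfolding inner_def Q_def
          proof (rule nn_integral_mono)
            fix y
            show "ennreal ((f y - f x)\<^sup>2 * g y) \<le> ennreal ((f y - f x)\<^sup>2 / norm (y - x) powr (real DIM('a) + \<alpha>))"
            proof (cases "y = x")
              case True thus ?thesis by simp
            next
              case False
              have np: "norm (y - x) > 0" using False by simp
              have "norm (y - x) \<le> norm y + norm x" by (rule norm_triangle_ineq4)
              hence "norm (y - x) \<le> 1 + norm y" using nx by simp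
              hence le: "norm (y - x) powr s \<le> (1 + norm y) powr s" using np s(2) by (intro powr_mono2) auto
              have "(f y - f x)\<^sup>2 * g y = (f y - f x)\<^sup>2 / (1 + norm y) powr s"
                unfolding g_def by (simp add: powr_minus divide_inverse)
              also have "\<dots> \<le> (f y - f x)\<^sup>2 / norm (y - x) powr s"
                using le np by (intro divide_left_mono) auto
              finally show ?thesis unfolding s_def by (rule ennreal_leI)
            qed
          qed
          have "ennreal c0 * (indicator B x * inner x) = ennreal c0 * inner x" using True by simp
          also have "\<dots> \<le> (dens x * ennreal (\<omega> x)) * Q x" using c iq by (rule mult_mono) auto
          finally show ?thesis by (simp add: mult.assoc)
        qed
      qed
      ultimately show ?thesis by simp
    qed

    have "ennreal vol * LHS \<le> ennreal (2 / Z) * D + ennreal (2 / Z) * (ennreal (K / Z) * D * ennreal G)"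
      using L3 JD by (meson add_left_mono mult_left_mono mult_right_mono order.trans zero_le)
    also have "\<dots> = ennreal (2 / Z * (1 + K / Z * G)) * D"
    proof -
      have r: "2 / Z * (1 + K / Z * G) = 2 / Z + 2 / Z * (K / Z) * G" by (simp add: algebra_simps)
      have n1: "0 \<le> 2 / Z" "0 \<le> K / Z" using Z K by auto
      have n2: "0 \<le> 2 / Z * (K / Z)" using n1 by (rule mult_nonneg_nonneg)
      have n3: "0 \<le> 2 / Z * (K / Z) * G" using n2 G(2) by (rule mult_nonneg_nonneg)
      have e1: "ennreal (2 / Z * (1 + K / Z * G)) = ennreal (2 / Z) + ennreal (2 / Z) * ennreal (K / Z) * ennreal G"
        unfolding r using ennreal_plus[OF n1(1) n3] ennreal_mult[OF n2 G(2)] ennreal_mult[OF n1] by simp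
      show ?thesis unfolding e1 by (simp add: algebra_simps)
    qed
    also have "\<dots> \<le> ennreal (2 / Z * (1 + K / Z * G)) * (ennreal (1 / c0) * R)"
    proof (rule mult_left_mono)
      have "D = ennreal (1 / c0) * (ennreal c0 * D)"
        using c0 by (simp add: mult.assoc[symmetric] ennreal_mult[symmetric])
      also have "\<dots> \<le> ennreal (1 / c0) * R" using RD by (rule mult_left_mono) simp
      finally show "D \<le> ennreal (1 / c0) * R" .
    qed simp
    finally have V1: "ennreal vol * LHS \<le> ennreal (2 / Z * (1 + K / Z * G)) * (ennreal (1 / c0) * R)" .
    have iv: "ennreal (1 / vol) * ennreal vol = 1" using vol ennreal_mult[of "1/vol" vol] by simp
    have "LHS = ennreal (1 / vol) * (ennreal vol * LHS)"
      by (simp add: mult.assoc[symmetric] iv)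
    also have "\<dots> \<le> ennreal (1 / vol) * (ennreal (2 / Z * (1 + K / Z * G)) * (ennreal (1 / c0) * R))"
      using V1 by (rule mult_left_mono) simp
    also have "\<dots> = ennreal C * R"
    proof -
      have n: "0 \<le> 1 / vol" "0 \<le> 2 / Z * (1 + K / Z * G)" "0 \<le> 1 / c0"
        using vol Z K G c0 by (auto intro!: mult_nonneg_nonneg add_nonneg_nonneg)
      have "C = 1 / vol * (2 / Z * (1 + K / Z * G)) * (1 / c0)" unfolding C_def by simp
      hence "ennreal C = ennreal (1 / vol) * ennreal (2 / Z * (1 + K / Z * G)) * ennreal (1 / c0)"
        using ennreal_mult[OF n(1) n(2)] ennreal_mult[OF mult_nonneg_nonneg[OF n(1) n(2)] n(3)] by simp
      thus ?thesis by (simp add: mult.assoc)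
    qed
    finally show "LHS \<le> ennreal C * R" .
  qed
qed

end
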